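(* Let $0=t_0<\dots<t_N=T$, $\tau_k=t_k-t_{k-1}$, $r_k=\tau_k/\tau_{k-1}$ ($2\le k\le N$), with all $r_k>0$. Let $u(x,t)$ satisfy $\|\partial_t^ku(\cdot,t)\|\le\bar Ct^{\alpha-k}$ for $t\in(0,T]$, $k=1,2,3$, with $\bar C>0$ and $\frac12\le\alpha\le1$. Define the truncation error $\eta^n:=\mathcal D_2u(\cdot,t_n)-\partial_tu(\cdot,t_n)$, where $\mathcal D_2v^n=\sum_{k=1}^nb^{(n)}_{n-k}(v^k-v^{k-1})$ (so $\mathcal D_2v^1=(v^1-v^0)/\tau_1$ and, for $n\ge2$, $\mathcal D_2v^n=\frac{1+2r_n}{\tau_n(1+r_n)}(v^n-v^{n-1})-\frac{r_n^2}{\tau_n(1+r_n)}(v^{n-1}-v^{n-2})$). Then $$\|\eta^j\|\le2\bar C\tau_j^2t_{j-1}^{\alpha-3}+\tfrac12\bar C\tau_{j-1}^2t_{j-2}^{\alpha-3},\ j\ge3;\qquad \|\eta^2\|\le\big(2r_2^2+1/(2\alpha)\big)\bar C\tau_1^{\alpha-1};\qquad \|\eta^1\|\le\frac{\bar C}{\alpha}\tau_1^{\alpha-1}.$$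
   Context: BDF2 kernels: $b^{(1)}_0=1/\tau_1$; for $n\ge2$, $b^{(n)}_0=\frac{1+2r_n}{\tau_n(1+r_n)}$, $b^{(n)}_1=-\frac{r_n^2}{\tau_n(1+r_n)}$, $b^{(n)}_j=0$ for $j\ge2$. In the paper $\|\cdot\|$ is the discrete $L^2$ norm over interior spatial grid points, $\|v\|=(\sum_{i=1}^{M-1}hv_i^2)^{1/2}$. *)

theory Defs
  imports "HOL-Analysis.Analysis"
begin

definition dnorm :: "nat \<Rightarrow> real \<Rightarrow> (nat \<Rightarrow> real) \<Rightarrow> real" where
  "dnorm M h v = sqrt (\<Sum>i\<in>{1..M-1}. h * (v i)\<^sup>2)"

definition tau :: "(nat \<Rightarrow> real) \<Rightarrow> nat \<Rightarrow> real" where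
  "tau t k = t k - t (k - 1)"

definition ratio :: "(nat \<Rightarrow> real) \<Rightarrow> nat \<Rightarrow> real" where
  "ratio t k = tau t k / tau t (k - 1)"

definition bker :: "(nat \<Rightarrow> real) \<Rightarrow> nat \<Rightarrow> nat \<Rightarrow> real" where
  "bker t n j =
     (if n = 1 then (if j = 0 then 1 / tau t 1 else 0)
      else if j = 0 then (1 + 2 * ratio t n) / (tau t n * (1 + ratio t n))
      else if j = 1 then - ((ratio t n)\<^sup>2 / (tau t n * (1 + ratio t n)))
      else 0)"

definition D2 :: "(nat \<Rightarrow> real) \<Rightarrow> (nat \<Rightarrow> real) \<Rightarrow> nat \<Rightarrow> real" where
  "D2 t v n = (\<Sum>k=1..n. bker t n (n - k) * (v k - v (k - 1)))"

end

theory Submission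
  imports Defs
begin

lemma cmp:
  fixes f g f' g' :: "real \<Rightarrow> real"
  assumes ab: "a \<le> b" and cf: "continuous_on {a..b} f" and cg: "continuous_on {a..b} g"
   and df: "\<And>x. a < x \<Longrightarrow> x < b \<Longrightarrow> (f has_real_derivative f' x) (at x)"
   and dg: "\<And>x. a < x \<Longrightarrow> x < b \<Longrightarrow> (g has_real_derivative g' x) (at x)"
   and le: "\<And>x. a < x \<Longrightarrow> x < b \<Longrightarrow> \<bar>f' x\<bar> \<le> g' x"
  shows "\<bar>f b - f a\<bar> \<le> g b - g a"
proof -
  have 1: "(\<lambda>x. g x - f x) a \<le> (\<lambda>x. g x - f x) b"
  proof (rule DERIV_nonneg_imp_increasing_open[OF ab])
    fix x assume "a < x" "x < b"
    then show "\<exists>y. ((\<lambda>x. g x - f x) has_real_derivative y) (at x) \<and> 0 \<le> y"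
      using df dg le[of x] by (intro exI[of _ "g' x - f' x"]) (auto simp: abs_le_iff intro: DERIV_diff)
  qed (rule continuous_on_diff[OF cg cf])
  have 2: "(\<lambda>x. g x + f x) a \<le> (\<lambda>x. g x + f x) b"
  proof (rule DERIV_nonneg_imp_increasing_open[OF ab])
    fix x assume "a < x" "x < b"
    then show "\<exists>y. ((\<lambda>x. g x + f x) has_real_derivative y) (at x) \<and> 0 \<le> y"
      using df dg le[of x] by (intro exI[of _ "g' x + f' x"]) (auto simp: abs_le_iff intro: DERIV_add)
  qed (rule continuous_on_add[OF cg cf])
  show ?thesis unfolding abs_le_iff using 1 2 by simp
qed

lemma at_of_within:
  assumes "(f has_real_derivative D) (at s within {0<..T})" "0 < s" "s < T"
  shows "(f has_real_derivative D) (at s)"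
proof -
  have "(f has_real_derivative D) (at s within {0<..<T})"
    using assms(1) by (rule DERIV_subset) auto
  moreover have "at s within {0<..<T} = at s" by (rule at_within_open) (use assms in auto)
  ultimately show ?thesis by metis
qed

lemma cont_of_deriv:
  assumes "\<And>s. s \<in> {0<..T} \<Longrightarrow> (f has_real_derivative f' s) (at s within {0<..T})"
    "0 < a" "b \<le> T"
  shows "continuous_on {a..b} f"
proof -
  have "continuous_on {0<..T} f"
    using assms(1) unfolding continuous_on_eq_continuous_within by (metis DERIV_continuous)
  then show ?thesis by (rule continuous_on_subset) (use assms in auto)
qed

lemma poly_ineq:
  fixes r \<alpha> :: real
  assumes "r > 0" "1/2 \<le> \<alpha>" "\<alpha> \<le> 1"
  shows "r + r / ((1 + r) * \<alpha>) \<le> 2 * r\<^sup>2 + 1 / (2 * \<alpha>)"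
proof -
  have P: "0 \<le> \<alpha> * (4*r^3 + 2*r^2 - 2*r) + 1 - r"
  proof (cases "r \<ge> 1/2")
    case True
    have "4*r^3 + 2*r^2 - 2*r = 2*r*(2*r - 1)*(r+1)" by (simp add: algebra_simps power2_eq_square power3_eq_cube)
    also have "\<dots> \<ge> 0" using True assms by simp
    finally have "(1/2) * (4*r^3 + 2*r^2 - 2*r) \<le> \<alpha> * (4*r^3 + 2*r^2 - 2*r)"
      using assms by (intro mult_right_mono) auto
    moreover have "(1/2) * (4*r^3 + 2*r^2 - 2*r) + 1 - r = 2*r^3 + (r - 1)^2"
      by (simp add: algebra_simps power2_eq_square power3_eq_cube)
    moreover have "r^3 \<ge> 0" "(r-1)^2 \<ge> 0" using assms by auto
    ultimately show ?thesis by linarith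
  next
    case False
    have "4*r^3 + 2*r^2 - 2*r = 2*r*(2*r - 1)*(r+1)" by (simp add: algebra_simps power2_eq_square power3_eq_cube)
    also have "\<dots> \<le> 0" using False assms by (intro mult_nonpos_nonneg mult_nonneg_nonpos) auto
    finally have "1 * (4*r^3 + 2*r^2 - 2*r) \<le> \<alpha> * (4*r^3 + 2*r^2 - 2*r)"
      using assms by (intro mult_right_mono_neg) auto
    moreover have "4*r^3 + 2*r^2 - 2*r + 1 - r = 4*r^3 + (2*r - 1)*(r - 1)"
      by (simp add: algebra_simps power2_eq_square power3_eq_cube)
    moreover have "(2*r - 1)*(r - 1) \<ge> 0" using False by (intro mult_nonpos_nonpos) auto
    moreover have "r^3 \<ge> 0" using assms by auto
    moreover have "1 * (4*r^3 + 2*r^2 - 2*r) = 4*r^3 + 2*r^2 - 2*r" by simp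
    ultimately show ?thesis by linarith
  qed
  have pos: "0 < 2 * \<alpha> * (1 + r)" "\<alpha> * (1 + r) \<noteq> 0" "\<alpha> + \<alpha> * r \<noteq> 0" proof -
    have "\<alpha> > 0" "1 + r > 0" using assms by auto
    then have "\<alpha> * (1 + r) > 0" by simp
    then show "0 < 2 * \<alpha> * (1 + r)" "\<alpha> * (1 + r) \<noteq> 0" "\<alpha> + \<alpha> * r \<noteq> 0" by (simp_all add: algebra_simps)
  qed
  have "(2 * r\<^sup>2 + 1 / (2 * \<alpha>) - (r + r / ((1 + r) * \<alpha>))) * (2 * \<alpha> * (1 + r))
        = \<alpha> * (4*r^3 + 2*r^2 - 2*r) + 1 - r"
  proof -
    have a: "\<alpha> > 0" "1 + r > 0" using assms by auto
    have e1: "1 / (2 * \<alpha>) * (2 * \<alpha> * (1 + r)) = 1 + r" using a by simp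
    have nz: "(1 + r) * \<alpha> \<noteq> 0" using a by simp
    have "2 * \<alpha> * (1 + r) = 2 * ((1 + r) * \<alpha>)" by simp
    then have e2: "r / ((1 + r) * \<alpha>) * (2 * \<alpha> * (1 + r)) = 2 * r"
      using nz by (metis mult.commute mult.left_commute nonzero_mult_div_cancel_left times_divide_eq_left times_divide_eq_right)
    have "(2 * r\<^sup>2 + 1 / (2 * \<alpha>) - (r + r / ((1 + r) * \<alpha>))) * (2 * \<alpha> * (1 + r))
      = 2 * r\<^sup>2 * (2 * \<alpha> * (1 + r)) + 1 / (2 * \<alpha>) * (2 * \<alpha> * (1 + r))
        - r * (2 * \<alpha> * (1 + r)) - r / ((1 + r) * \<alpha>) * (2 * \<alpha> * (1 + r))"
      by (simp only: algebra_simps)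
    also have "\<dots> = \<alpha> * (4*r^3 + 2*r^2 - 2*r) + 1 - r" unfolding e1 e2
      by (simp add: algebra_simps power2_eq_square power3_eq_cube)
    finally show ?thesis .
  qed
  with P have "0 \<le> (2 * r\<^sup>2 + 1 / (2 * \<alpha>) - (r + r / ((1 + r) * \<alpha>))) * (2 * \<alpha> * (1 + r))" by simp
  with pos have "0 \<le> 2 * r\<^sup>2 + 1 / (2 * \<alpha>) - (r + r / ((1 + r) * \<alpha>))"
    by (simp add: zero_le_mult_iff)
  then show ?thesis by simp
qed

lemma cont_closed0:
  fixes f :: "real \<Rightarrow> real"
  assumes "continuous_on {0<..b} f" "continuous (at 0 within {0..b}) f"
  shows "continuous_on {0..b} f"
  unfolding continuous_on_eq_continuous_within
proof
  fix x assume x: "x \<in> {0..b}"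
  show "continuous (at x within {0..b}) f"
  proof (cases "x = 0")
    case True then show ?thesis using assms(2) by simp
  next
    case False
    then have "x > 0" using x by auto
    have "at x within {0..b} = at x within {0<..b}"
      by (rule at_within_nhd[where S="{0<..<b+1}"]) (use \<open>x > 0\<close> x in auto)
    moreover have "continuous (at x within {0<..b}) f"
      using assms(1) \<open>x > 0\<close> x unfolding continuous_on_eq_continuous_within by auto
    ultimately show ?thesis by simp
  qed
qed

lemma S1:
  fixes U U1 U2 :: "real \<Rightarrow> real"
  assumes t1: "0 < t1" "t1 \<le> T" and \<alpha>: "0 < \<alpha>" and K: "0 \<le> KC"
   and cont: "continuous_on {0..T} U"
   and d1: "\<And>s. s \<in> {0<..T} \<Longrightarrow> (U has_real_derivative U1 s) (at s within {0<..T})"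
   and d2: "\<And>s. s \<in> {0<..T} \<Longrightarrow> (U1 has_real_derivative U2 s) (at s within {0<..T})"
   and b1: "\<And>s. s \<in> {0<..T} \<Longrightarrow> \<bar>U1 s\<bar> \<le> KC * s powr (\<alpha> - 1)"
   and b2: "\<And>s. s \<in> {0<..T} \<Longrightarrow> \<bar>U2 s\<bar> \<le> KC * s powr (\<alpha> - 2)"
  shows "\<bar>U t1 - U 0 - t1 * U1 t1\<bar> \<le> KC / \<alpha> * t1 powr \<alpha>"
proof -
  define f where "f = (\<lambda>s. U s - s * U1 s)"
  define g where "g = (\<lambda>s::real. KC / \<alpha> * s powr \<alpha>)"
  have cU: "continuous_on {0<..T} U"
    using d1 unfolding continuous_on_eq_continuous_within by (metis DERIV_continuous)
  have cU1: "continuous_on {0<..T} U1"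
    using d2 unfolding continuous_on_eq_continuous_within by (metis DERIV_continuous)
  have cU': "continuous_on {0<..t1} U" by (rule continuous_on_subset[OF cU]) (use t1 in auto)
  have cU1': "continuous_on {0<..t1} U1" by (rule continuous_on_subset[OF cU1]) (use t1 in auto)
  have "continuous_on {0<..t1} f" unfolding f_def
    by (intro continuous_intros cU' cU1')
  moreover have "continuous (at 0 within {0..t1}) f"
  proof -
    have c0: "continuous (at 0 within {0..t1}) U"
    proof -
      have "continuous_on {0..t1} U" by (rule continuous_on_subset[OF cont]) (use t1 in auto)
      then show ?thesis unfolding continuous_on_eq_continuous_within using t1 by auto
    qed
    have lim: "((\<lambda>s. KC * s powr \<alpha>) \<longlongrightarrow> 0) (at 0 within {0..t1})"
    proof -
      have "((\<lambda>s::real. s powr \<alpha>) \<longlongrightarrow> 0) (at 0 within {0..t1})"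
      proof (rule tendsto_zero_powrI[where b=\<alpha>])
        show "\<forall>\<^sub>F x in at 0 within {0..t1}. 0 \<le> (x::real)"
          unfolding eventually_at_filter by (intro always_eventually) auto
      qed (simp_all add: \<alpha> tendsto_ident_at)
      then show ?thesis by (rule tendsto_mult_right_zero)
    qed
    have "((\<lambda>s. s * U1 s) \<longlongrightarrow> 0) (at 0 within {0..t1})"
    proof (rule Lim_null_comparison[OF _ lim])
      show "\<forall>\<^sub>F s in at 0 within {0..t1}. norm (s * U1 s) \<le> KC * s powr \<alpha>"
        unfolding eventually_at_filter
      proof (intro always_eventually allI impI)
        fix s :: real assume "s \<noteq> 0" "s \<in> {0..t1}"
        then have s: "0 < s" "s \<le> T" using t1 by auto
        have "norm (s * U1 s) = s * \<bar>U1 s\<bar>" using s by (simp add: abs_mult)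
        also have "\<dots> \<le> s * (KC * s powr (\<alpha> - 1))" using b1[of s] s by (intro mult_left_mono) auto
        also have "\<dots> = KC * (s * s powr (\<alpha> - 1))" by simp
        also have "s * s powr (\<alpha> - 1) = s powr \<alpha>" using s by (simp add: powr_mult_base)
        finally show "norm (s * U1 s) \<le> KC * s powr \<alpha>" .
      qed
    qed
    moreover have cU0: "(U \<longlongrightarrow> U 0) (at 0 within {0..t1})" using c0 by (simp add: continuous_within)
    ultimately have "((\<lambda>s. U s - s * U1 s) \<longlongrightarrow> U 0 - 0) (at 0 within {0..t1})"
      using tendsto_diff by blast
    then show ?thesis unfolding f_def continuous_within by simp
  qed
  ultimately have cf: "continuous_on {0..t1} f" by (rule cont_closed0)
  have cg: "continuous_on {0..t1} g" unfolding g_def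
    by (intro continuous_on_mult continuous_on_const continuous_on_powr' continuous_on_id) (use \<alpha> in auto)
  have "\<bar>f t1 - f 0\<bar> \<le> g t1 - g 0"
  proof (rule cmp[OF _ cf cg])
    fix x assume x: "0 < x" "x < t1"
    then have xT: "x \<in> {0<..T}" "x < T" using t1 by auto
    have dU: "(U has_real_derivative U1 x) (at x)" by (rule at_of_within[OF d1[OF xT(1)]]) (use xT in auto)
    have dU1: "(U1 has_real_derivative U2 x) (at x)" by (rule at_of_within[OF d2[OF xT(1)]]) (use xT in auto)
    show "(f has_real_derivative (- (x * U2 x))) (at x)" unfolding f_def
      by (rule DERIV_cong[OF DERIV_diff[OF dU DERIV_mult[OF DERIV_ident dU1]]]) simp
    show "(g has_real_derivative KC * x powr (\<alpha> - 1)) (at x)" unfolding g_def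
      by (rule DERIV_cong[OF DERIV_cmult[OF has_real_derivative_powr]]) (use x \<alpha> in auto)
    have "\<bar>- (x * U2 x)\<bar> = x * \<bar>U2 x\<bar>" using x by (simp add: abs_mult)
    also have "\<dots> \<le> x * (KC * x powr (\<alpha> - 2))" using b2[OF xT(1)] x by (intro mult_left_mono) auto
    also have "\<dots> = KC * (x * x powr (\<alpha> - 2))" by simp
    also have "x * x powr (\<alpha> - 2) = x powr (\<alpha> - 1)" using x by (simp add: powr_mult_base)
    finally show "\<bar>- (x * U2 x)\<bar> \<le> KC * x powr (\<alpha> - 1)" .
  qed (use t1 in auto)
  then show ?thesis unfolding f_def g_def using \<alpha> by simp
qed


lemma S2:
  fixes U U1 U2 :: "real \<Rightarrow> real"
  assumes t: "0 < t1" "t1 < t2" "t2 \<le> T" and \<alpha>: "1/2 \<le> \<alpha>" "\<alpha> \<le> 1" and K: "0 \<le> KC"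
   and cont: "continuous_on {0..T} U"
   and d1: "\<And>s. s \<in> {0<..T} \<Longrightarrow> (U has_real_derivative U1 s) (at s within {0<..T})"
   and d2: "\<And>s. s \<in> {0<..T} \<Longrightarrow> (U1 has_real_derivative U2 s) (at s within {0<..T})"
   and b1: "\<And>s. s \<in> {0<..T} \<Longrightarrow> \<bar>U1 s\<bar> \<le> KC * s powr (\<alpha> - 1)"
   and b2: "\<And>s. s \<in> {0<..T} \<Longrightarrow> \<bar>U2 s\<bar> \<le> KC * s powr (\<alpha> - 2)"
   and \<tau>: "\<tau> = t2 - t1" and r: "r = \<tau> / t1"
  shows "\<bar>(1 + 2 * r) / (\<tau> * (1 + r)) * (U t2 - U t1) - r\<^sup>2 / (\<tau> * (1 + r)) * (U t1 - U 0) - U1 t2\<bar>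
     \<le> (2 * r\<^sup>2 + 1 / (2 * \<alpha>)) * KC * t1 powr (\<alpha> - 1)"
proof -
  define a where "a = (1 + 2 * r) / (\<tau> * (1 + r))"
  define b where "b = r\<^sup>2 / (\<tau> * (1 + r))"
  have \<tau>0: "\<tau> > 0" using t \<tau> by simp
  have r0: "r > 0" using \<tau>0 t r by simp
  have \<tau>r: "\<tau> = r * t1" using r t by simp
  have aT: "a * \<tau> = (1 + 2 * r) / (1 + r)" unfolding a_def using \<tau>0 r0 by simp
  have bt: "b * t1 = r / (1 + r)" unfolding b_def \<tau>r using t r0 by (simp add: power2_eq_square)
  have id0: "a * \<tau> - 1 - b * t1 = 0" unfolding aT bt using r0 by (simp add: field_simps)
  have aT2: "a * \<tau> \<le> 2" unfolding aT using r0 by (simp add: field_simps)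
  have a0: "a \<ge> 0" unfolding a_def using r0 \<tau>0 by simp
  have b0: "b \<ge> 0" unfolding b_def using r0 \<tau>0 by simp
  have \<alpha>0: "\<alpha> > 0" using \<alpha> by simp
  define f where "f = (\<lambda>s. a * (U s + (t2 - s) * U1 s) - U1 s)"
  define g where "g = (\<lambda>s::real. KC * t1 powr (\<alpha> - 2) * s)"
  have cU: "continuous_on {t1..t2} U" by (rule cont_of_deriv[OF d1]) (use t in auto)
  have cU1: "continuous_on {t1..t2} U1" by (rule cont_of_deriv[OF d2]) (use t in auto)
  have cf: "continuous_on {t1..t2} f" unfolding f_def
    by (intro continuous_on_diff continuous_on_mult continuous_on_add continuous_on_const continuous_on_id cU cU1)
  have cg: "continuous_on {t1..t2} g" unfolding g_def
    by (intro continuous_on_mult continuous_on_const continuous_on_id)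
  have Phi: "\<bar>f t2 - f t1\<bar> \<le> g t2 - g t1"
  proof (rule cmp[OF _ cf cg])
    fix x assume x: "t1 < x" "x < t2"
    then have xT: "x \<in> {0<..T}" "x < T" "0 < x" using t by auto
    have dU: "(U has_real_derivative U1 x) (at x)" by (rule at_of_within[OF d1[OF xT(1)]]) (use xT in auto)
    have dU1: "(U1 has_real_derivative U2 x) (at x)" by (rule at_of_within[OF d2[OF xT(1)]]) (use xT in auto)
    show "(f has_real_derivative ((a * (t2 - x) - 1) * U2 x)) (at x)" unfolding f_def
      by (rule DERIV_cong[OF DERIV_diff[OF DERIV_cmult[OF DERIV_add[OF dU DERIV_mult[OF DERIV_diff[OF DERIV_const DERIV_ident] dU1]]] dU1]])
        (simp add: algebra_simps)
    show "(g has_real_derivative KC * t1 powr (\<alpha> - 2)) (at x)" unfolding g_def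
      by (rule DERIV_cong[OF DERIV_cmult[OF DERIV_ident]]) simp
    have m1: "\<bar>a * (t2 - x) - 1\<bar> \<le> 1"
    proof -
      have "a * (t2 - x) \<le> a * \<tau>" using x \<tau> a0 by (intro mult_left_mono) auto
      moreover have "0 \<le> a * (t2 - x)" using x a0 by simp
      ultimately show ?thesis using aT2 by linarith
    qed
    have m2: "x powr (\<alpha> - 2) \<le> t1 powr (\<alpha> - 2)"
      by (rule powr_mono2') (use \<alpha> t x in auto)
    have "\<bar>(a * (t2 - x) - 1) * U2 x\<bar> = \<bar>a * (t2 - x) - 1\<bar> * \<bar>U2 x\<bar>" by (simp add: abs_mult)
    also have "\<dots> \<le> 1 * (KC * x powr (\<alpha> - 2))"
      using m1 b2[OF xT(1)] by (intro mult_mono) auto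
    also have "\<dots> \<le> KC * t1 powr (\<alpha> - 2)" using m2 K by (simp add: mult_left_mono)
    finally show "\<bar>(a * (t2 - x) - 1) * U2 x\<bar> \<le> KC * t1 powr (\<alpha> - 2)" .
  qed (use t in auto)
  have P1: "\<bar>U t1 - U 0 - t1 * U1 t1\<bar> \<le> KC / \<alpha> * t1 powr \<alpha>"
    by (rule S1[OF _ _ \<alpha>0 K cont d1 d2 b1 b2]) (use t in auto)
  have eq: "a * (U t2 - U t1) - b * (U t1 - U 0) - U1 t2
      = (f t2 - f t1) - b * (U t1 - U 0 - t1 * U1 t1) + (a * \<tau> - 1 - b * t1) * U1 t1"
    unfolding f_def \<tau> by (simp add: algebra_simps)
  have "\<bar>a * (U t2 - U t1) - b * (U t1 - U 0) - U1 t2\<bar> \<le> \<bar>f t2 - f t1\<bar> + b * \<bar>U t1 - U 0 - t1 * U1 t1\<bar>"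
    unfolding eq id0 using abs_triangle_ineq4[of "f t2 - f t1" "b * (U t1 - U 0 - t1 * U1 t1)"] b0
    by (simp add: abs_mult)
  also have "\<dots> \<le> (g t2 - g t1) + b * (KC / \<alpha> * t1 powr \<alpha>)"
    using Phi P1 b0 by (intro add_mono mult_left_mono) auto
  also have "g t2 - g t1 = KC * t1 powr (\<alpha> - 1) * r"
  proof -
    have "g t2 - g t1 = KC * t1 powr (\<alpha> - 2) * \<tau>" unfolding g_def \<tau> by (simp add: algebra_simps)
    also have "\<dots> = KC * (t1 * t1 powr (\<alpha> - 2)) * r" unfolding \<tau>r by simp
    also have "t1 * t1 powr (\<alpha> - 2) = t1 powr (\<alpha> - 1)" using t by (simp add: powr_mult_base)
    finally show ?thesis .
  qed
  also have "b * (KC / \<alpha> * t1 powr \<alpha>) = KC * t1 powr (\<alpha> - 1) * (r / ((1 + r) * \<alpha>))"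
  proof -
    have "t1 powr \<alpha> = t1 * t1 powr (\<alpha> - 1)" using t by (simp add: powr_mult_base)
    then have "b * (KC / \<alpha> * t1 powr \<alpha>) = (b * t1) * KC / \<alpha> * t1 powr (\<alpha> - 1)" by simp
    also have "\<dots> = KC * t1 powr (\<alpha> - 1) * (r / ((1 + r) * \<alpha>))" unfolding bt by simp
    finally show ?thesis .
  qed
  also have "KC * t1 powr (\<alpha> - 1) * r + KC * t1 powr (\<alpha> - 1) * (r / ((1 + r) * \<alpha>))
      = KC * t1 powr (\<alpha> - 1) * (r + r / ((1 + r) * \<alpha>))" by (simp add: algebra_simps)
  also have "\<dots> \<le> KC * t1 powr (\<alpha> - 1) * (2 * r\<^sup>2 + 1 / (2 * \<alpha>))"
    using poly_ineq[OF r0 \<alpha>] K by (intro mult_left_mono) auto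
  finally show ?thesis unfolding a_def b_def by (simp add: algebra_simps)
qed


lemma S3:
  fixes U U1 U2 U3 :: "real \<Rightarrow> real"
  assumes t: "0 < d" "d < c" "c < e" "e \<le> T" and \<alpha>: "\<alpha> \<le> 1" and K: "0 \<le> KC"
   and d1: "\<And>s. s \<in> {0<..T} \<Longrightarrow> (U has_real_derivative U1 s) (at s within {0<..T})"
   and d2: "\<And>s. s \<in> {0<..T} \<Longrightarrow> (U1 has_real_derivative U2 s) (at s within {0<..T})"
   and d3: "\<And>s. s \<in> {0<..T} \<Longrightarrow> (U2 has_real_derivative U3 s) (at s within {0<..T})"
   and b3: "\<And>s. s \<in> {0<..T} \<Longrightarrow> \<bar>U3 s\<bar> \<le> KC * s powr (\<alpha> - 3)"
   and \<tau>: "\<tau> = e - c" and \<sigma>: "\<sigma> = c - d" and r: "r = \<tau> / \<sigma>"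
  shows "\<bar>(1 + 2 * r) / (\<tau> * (1 + r)) * (U e - U c) - r\<^sup>2 / (\<tau> * (1 + r)) * (U c - U d) - U1 e\<bar>
     \<le> 2 * KC * \<tau>\<^sup>2 * c powr (\<alpha> - 3) + 1/2 * KC * \<sigma>\<^sup>2 * d powr (\<alpha> - 3)"
proof -
  define a where "a = (1 + 2 * r) / (\<tau> * (1 + r))"
  define b where "b = r\<^sup>2 / (\<tau> * (1 + r))"
  have \<tau>0: "\<tau> > 0" using t \<tau> by simp
  have \<sigma>0: "\<sigma> > 0" using t \<sigma> by simp
  have r0: "r > 0" using \<tau>0 \<sigma>0 r by simp
  have \<tau>r: "\<tau> = r * \<sigma>" using r \<sigma>0 by simp
  have aT: "a * \<tau> = (1 + 2 * r) / (1 + r)" unfolding a_def using \<tau>0 r0 by simp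
  have bs: "b * \<sigma> = r / (1 + r)" unfolding b_def \<tau>r using \<sigma>0 r0 by (simp add: power2_eq_square)
  have id1: "a * \<tau> - 1 - b * \<sigma> = 0" unfolding aT bs using r0 by (simp add: field_simps)
  have id2: "a * \<tau> * \<tau> / 2 - \<tau> + b * \<sigma> * \<sigma> / 2 = 0"
  proof -
    have "a * \<tau> * \<tau> / 2 - \<tau> + b * \<sigma> * \<sigma> / 2 = ((1 + 2 * r) / (1 + r)) * (r * \<sigma>) / 2 - r * \<sigma> + (r / (1 + r)) * \<sigma> / 2"
      unfolding aT[symmetric] bs[symmetric] using \<tau>r by simp
    also have "\<dots> = 0" using r0 by (simp add: field_simps)
    finally show ?thesis .
  qed
  have aT2: "a * \<tau> \<le> 2" unfolding aT using r0 by (simp add: field_simps)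
  have a0: "a \<ge> 0" unfolding a_def using r0 \<tau>0 by simp
  have b0: "b \<ge> 0" unfolding b_def using r0 \<tau>0 by simp
  have bs1: "b * \<sigma> \<le> 1" unfolding bs using r0 by simp
  have Dlin: "\<And>x p. ((\<lambda>s::real. p - s) has_real_derivative (0 - 1)) (at x)"
    by (rule DERIV_diff[OF DERIV_const DERIV_ident])
  have Dlin2: "\<And>x p. ((\<lambda>s::real. s - p) has_real_derivative (1 - 0)) (at x)"
    by (rule DERIV_diff[OF DERIV_ident DERIV_const])
  have cU: "\<And>a b. 0 < a \<Longrightarrow> b \<le> T \<Longrightarrow> continuous_on {a..b} U" by (rule cont_of_deriv[OF d1])
  have cU1: "\<And>a b. 0 < a \<Longrightarrow> b \<le> T \<Longrightarrow> continuous_on {a..b} U1" by (rule cont_of_deriv[OF d2])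
  have cU2: "\<And>a b. 0 < a \<Longrightarrow> b \<le> T \<Longrightarrow> continuous_on {a..b} U2" by (rule cont_of_deriv[OF d3])
  define f where "f = (\<lambda>s. a * (U s + (e - s) * U1 s + (1/2) * ((e - s) * ((e - s) * U2 s))) - (U1 s + (e - s) * U2 s))"
  define g where "g = (\<lambda>s::real. KC * c powr (\<alpha> - 3) * (-(1/2) * ((e - s) * (e - s))))"
  have cf: "continuous_on {c..e} f" unfolding f_def
    by (intro continuous_on_diff continuous_on_mult continuous_on_add continuous_on_const continuous_on_id
        cU cU1 cU2) (use t in auto)
  have cg: "continuous_on {c..e} g" unfolding g_def
    by (intro continuous_on_diff continuous_on_mult continuous_on_const continuous_on_id)
  have Phi: "\<bar>f e - f c\<bar> \<le> g e - g c"
  proof (rule cmp[OF _ cf cg])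
    fix x assume x: "c < x" "x < e"
    then have xT: "x \<in> {0<..T}" "x < T" "0 < x" using t by auto
    have dU: "(U has_real_derivative U1 x) (at x)" by (rule at_of_within[OF d1[OF xT(1)]]) (use xT in auto)
    have dU1: "(U1 has_real_derivative U2 x) (at x)" by (rule at_of_within[OF d2[OF xT(1)]]) (use xT in auto)
    have dU2: "(U2 has_real_derivative U3 x) (at x)" by (rule at_of_within[OF d3[OF xT(1)]]) (use xT in auto)
    show "(f has_real_derivative ((a * ((e - x) * (e - x)) / 2 - (e - x)) * U3 x)) (at x)" unfolding f_def
      by (rule DERIV_cong[OF DERIV_diff[OF DERIV_cmult[OF DERIV_add[OF DERIV_add[OF dU DERIV_mult[OF Dlin dU1]]
              DERIV_cmult[OF DERIV_mult[OF Dlin DERIV_mult[OF Dlin dU2]]]]]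
              DERIV_add[OF dU1 DERIV_mult[OF Dlin dU2]]]])
        (simp add: field_simps)
    show "(g has_real_derivative KC * c powr (\<alpha> - 3) * (e - x)) (at x)" unfolding g_def
      by (rule DERIV_cong[OF DERIV_cmult[OF DERIV_cmult[OF DERIV_mult[OF Dlin Dlin]]]]) (simp add: algebra_simps)
    have m1: "\<bar>a * ((e - x) * (e - x)) / 2 - (e - x)\<bar> \<le> e - x"
    proof -
      have "a * (e - x) \<le> a * \<tau>" using x \<tau> a0 by (intro mult_left_mono) auto
      then have "a * (e - x) \<le> 2" using aT2 by linarith
      then have "a * (e - x) * (e - x) \<le> 2 * (e - x)" using x by (intro mult_right_mono) auto
      moreover have "0 \<le> a * (e - x) * (e - x)" using x a0 by simp
      ultimately show ?thesis by (simp add: abs_le_iff mult.assoc)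
    qed
    have m2: "x powr (\<alpha> - 3) \<le> c powr (\<alpha> - 3)"
      by (rule powr_mono2') (use \<alpha> t x in auto)
    have "\<bar>(a * ((e - x) * (e - x)) / 2 - (e - x)) * U3 x\<bar> = \<bar>a * ((e - x) * (e - x)) / 2 - (e - x)\<bar> * \<bar>U3 x\<bar>" by (simp add: abs_mult)
    also have "\<dots> \<le> (e - x) * (KC * c powr (\<alpha> - 3))"
    proof (rule mult_mono[OF m1])
      show "\<bar>U3 x\<bar> \<le> KC * c powr (\<alpha> - 3)" using b3[OF xT(1)] m2 K
        by (meson mult_left_mono order_trans)
    qed (use x in auto)
    finally show "\<bar>(a * ((e - x) * (e - x)) / 2 - (e - x)) * U3 x\<bar> \<le> KC * c powr (\<alpha> - 3) * (e - x)"
      by (simp add: algebra_simps)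
  qed (use t in auto)
  define f2 where "f2 = (\<lambda>s. U s + (d - s) * U1 s + (1/2) * ((d - s) * ((d - s) * U2 s)))"
  define g2 where "g2 = (\<lambda>s::real. KC * d powr (\<alpha> - 3) * ((1/6) * ((s - d) * ((s - d) * (s - d)))))"
  have cf2: "continuous_on {d..c} f2" unfolding f2_def
    by (intro continuous_on_diff continuous_on_mult continuous_on_add continuous_on_const continuous_on_id
        cU cU1 cU2) (use t in auto)
  have cg2: "continuous_on {d..c} g2" unfolding g2_def
    by (intro continuous_on_diff continuous_on_mult continuous_on_const continuous_on_id)
  have Psi: "\<bar>f2 c - f2 d\<bar> \<le> g2 c - g2 d"
  proof (rule cmp[OF _ cf2 cg2])
    fix x assume x: "d < x" "x < c"
    then have xT: "x \<in> {0<..T}" "x < T" "0 < x" using t by auto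
    have dU: "(U has_real_derivative U1 x) (at x)" by (rule at_of_within[OF d1[OF xT(1)]]) (use xT in auto)
    have dU1: "(U1 has_real_derivative U2 x) (at x)" by (rule at_of_within[OF d2[OF xT(1)]]) (use xT in auto)
    have dU2: "(U2 has_real_derivative U3 x) (at x)" by (rule at_of_within[OF d3[OF xT(1)]]) (use xT in auto)
    show "(f2 has_real_derivative ((1/2) * ((x - d) * (x - d)) * U3 x)) (at x)" unfolding f2_def
      by (rule DERIV_cong[OF DERIV_add[OF DERIV_add[OF dU DERIV_mult[OF Dlin dU1]]
              DERIV_cmult[OF DERIV_mult[OF Dlin DERIV_mult[OF Dlin dU2]]]]])
        (simp add: field_simps)
    show "(g2 has_real_derivative KC * d powr (\<alpha> - 3) * ((1/2) * ((x - d) * (x - d)))) (at x)" unfolding g2_def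
      by (rule DERIV_cong[OF DERIV_cmult[OF DERIV_cmult[OF DERIV_mult[OF Dlin2 DERIV_mult[OF Dlin2 Dlin2]]]]])
        (simp add: field_simps)
    have m2: "x powr (\<alpha> - 3) \<le> d powr (\<alpha> - 3)"
      by (rule powr_mono2') (use \<alpha> t x in auto)
    have u3: "\<bar>U3 x\<bar> \<le> KC * d powr (\<alpha> - 3)" using b3[OF xT(1)] m2 K
        by (meson mult_left_mono order_trans)
    have "\<bar>(1/2) * ((x - d) * (x - d)) * U3 x\<bar> = (1/2) * ((x - d) * (x - d)) * \<bar>U3 x\<bar>" by (simp add: abs_mult)
    also have "\<dots> \<le> (1/2) * ((x - d) * (x - d)) * (KC * d powr (\<alpha> - 3))"
      using u3 by (intro mult_left_mono) auto
    finally show "\<bar>(1/2) * ((x - d) * (x - d)) * U3 x\<bar> \<le> KC * d powr (\<alpha> - 3) * ((1/2) * ((x - d) * (x - d)))"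
      by (simp add: algebra_simps)
  qed (use t in auto)
  have eq: "a * (U e - U c) - b * (U c - U d) - U1 e
      = (f e - f c) - b * (f2 c - f2 d) + (a * \<tau> - 1 - b * \<sigma>) * U1 c + (a * \<tau> * \<tau> / 2 - \<tau> + b * \<sigma> * \<sigma> / 2) * U2 c"
    unfolding f_def f2_def \<tau> \<sigma> by (simp add: field_simps)
  have "\<bar>a * (U e - U c) - b * (U c - U d) - U1 e\<bar> \<le> \<bar>f e - f c\<bar> + b * \<bar>f2 c - f2 d\<bar>"
    unfolding eq id1 id2 using abs_triangle_ineq4[of "f e - f c" "b * (f2 c - f2 d)"] b0
    by (simp add: abs_mult)
  also have "\<dots> \<le> (g e - g c) + b * (g2 c - g2 d)"
    using Phi Psi b0 by (intro add_mono mult_left_mono) auto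
  also have "g e - g c = 1/2 * (KC * \<tau>\<^sup>2 * c powr (\<alpha> - 3))"
    unfolding g_def \<tau> by (simp add: algebra_simps power2_eq_square)
  also have "b * (g2 c - g2 d) = (b * \<sigma>) * (1/6 * (KC * \<sigma>\<^sup>2 * d powr (\<alpha> - 3)))"
  proof -
    have "g2 c - g2 d = KC * d powr (\<alpha> - 3) * ((1/6) * (\<sigma> * (\<sigma> * \<sigma>)))" unfolding g2_def \<sigma> by simp
    then show ?thesis by (simp add: algebra_simps power2_eq_square)
  qed
  also have "1/2 * (KC * \<tau>\<^sup>2 * c powr (\<alpha> - 3)) + (b * \<sigma>) * (1/6 * (KC * \<sigma>\<^sup>2 * d powr (\<alpha> - 3)))
      \<le> 2 * KC * \<tau>\<^sup>2 * c powr (\<alpha> - 3) + 1/2 * KC * \<sigma>\<^sup>2 * d powr (\<alpha> - 3)"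
  proof -
    have n: "0 \<le> KC * \<tau>\<^sup>2 * c powr (\<alpha> - 3)" "0 \<le> KC * \<sigma>\<^sup>2 * d powr (\<alpha> - 3)" using K by auto
    have "(b * \<sigma>) * (1/6 * (KC * \<sigma>\<^sup>2 * d powr (\<alpha> - 3))) \<le> 1 * (1/6 * (KC * \<sigma>\<^sup>2 * d powr (\<alpha> - 3)))"
      using bs1 n by (intro mult_right_mono) auto
    then show ?thesis using n by simp
  qed
  finally show ?thesis unfolding a_def b_def .
qed


lemma mesh_lt:
  fixes t :: "nat \<Rightarrow> real" and k m N :: nat
  assumes mesh: "\<And>k. 1 \<le> k \<Longrightarrow> k \<le> N \<Longrightarrow> t (k - 1) < t k"
  shows "m < k \<Longrightarrow> k \<le> N \<Longrightarrow> t m < t k"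
proof (induction k)
  case 0 then show ?case by simp
next
  case (Suc k)
  have s: "t k < t (Suc k)" using mesh[of "Suc k"] Suc.prems by simp
  show ?case
  proof (cases "m = k")
    case True then show ?thesis using s by simp
  next
    case False
    then have "t m < t k" using Suc by simp
    then show ?thesis using s by simp
  qed
qed

lemma dnorm_alt: "h > 0 \<Longrightarrow> dnorm M h v = L2_set (\<lambda>i. sqrt h * v i) {1..M-1}"
  unfolding dnorm_def L2_set_def by (simp add: power_mult_distrib)

lemma CS:
  assumes "h > 0"
  shows "\<bar>\<Sum>i\<in>{1..M-1}. h * e i * v i\<bar> \<le> dnorm M h e * dnorm M h v"
proof -
  have "\<bar>\<Sum>i\<in>{1..M-1}. h * e i * v i\<bar> \<le> (\<Sum>i\<in>{1..M-1}. \<bar>h * e i * v i\<bar>)" by (rule sum_abs)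
  also have "\<dots> = (\<Sum>i\<in>{1..M-1}. \<bar>sqrt h * e i\<bar> * \<bar>sqrt h * v i\<bar>)"
  proof (rule sum.cong)
    fix i
    have "\<bar>sqrt h * e i\<bar> * \<bar>sqrt h * v i\<bar> = \<bar>(sqrt h * sqrt h) * e i * v i\<bar>" by (simp add: abs_mult)
    also have "sqrt h * sqrt h = h" using assms by simp
    finally show "\<bar>h * e i * v i\<bar> = \<bar>sqrt h * e i\<bar> * \<bar>sqrt h * v i\<bar>" by simp
  qed simp
  also have "\<dots> \<le> L2_set (\<lambda>i. sqrt h * e i) {1..M-1} * L2_set (\<lambda>i. sqrt h * v i) {1..M-1}"
    by (rule L2_set_mult_ineq)
  finally show ?thesis using dnorm_alt[OF assms] by simp
qed

lemma dnorm_sq: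
  assumes "h > 0"
  shows "(\<Sum>i\<in>{1..M-1}. h * e i * e i) = dnorm M h e * dnorm M h e"
proof -
  have "0 \<le> (\<Sum>i\<in>{1..M-1}. h * (e i)\<^sup>2)" using assms by (intro sum_nonneg) auto
  then show ?thesis unfolding dnorm_def by (simp add: power2_eq_square mult.assoc)
qed

lemma D2_lin:
  "D2 t (\<lambda>m. \<Sum>i\<in>I. c i * w i m) n = (\<Sum>i\<in>I. c i * D2 t (w i) n)"
proof -
  have "D2 t (\<lambda>m. \<Sum>i\<in>I. c i * w i m) n
      = (\<Sum>k=1..n. \<Sum>i\<in>I. bker t n (n - k) * (c i * (w i k - w i (k - 1))))"
    unfolding D2_def by (simp add: sum_distrib_left sum_subtractf[symmetric] right_diff_distrib)
  also have "\<dots> = (\<Sum>i\<in>I. \<Sum>k=1..n. bker t n (n - k) * (c i * (w i k - w i (k - 1))))"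
    by (rule sum.swap)
  also have "\<dots> = (\<Sum>i\<in>I. c i * D2 t (w i) n)"
    unfolding D2_def by (simp add: sum_distrib_left mult_ac)
  finally show ?thesis .
qed

lemma D2_one: "D2 t v 1 = (v 1 - v 0) / tau t 1"
  unfolding D2_def bker_def by simp

lemma D2_ge2:
  assumes "2 \<le> n"
  shows "D2 t v n = bker t n 0 * (v n - v (n - 1)) + bker t n 1 * (v (n - 1) - v (n - 2))"
proof -
  obtain m where n: "n = Suc (Suc m)" using assms by (metis add_2_eq_Suc le_Suc_ex)
  have z: "(\<Sum>k=1..m. bker t n (n - k) * (v k - v (k - 1))) = 0"
    by (rule sum.neutral) (auto simp: bker_def n)
  have "D2 t v n = (\<Sum>k=1..m. bker t n (n - k) * (v k - v (k - 1)))
      + bker t n 1 * (v (Suc m) - v m) + bker t n 0 * (v (Suc (Suc m)) - v (Suc m))"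
    unfolding D2_def n by (simp add: sum.cl_ivl_Suc)
  then show ?thesis using z n by simp
qed


lemma reduce:
  fixes t :: "nat \<Rightarrow> real" and x :: "nat \<Rightarrow> real" and u u1 u2 u3 :: "real \<Rightarrow> real \<Rightarrow> real"
  assumes h: "h > 0" and Bnn: "0 \<le> B" and Cb: "Cb > 0"
    and cont: "\<And>i. continuous_on {0..T} (u (x i))"
    and d1: "\<And>i s. s \<in> {0<..T} \<Longrightarrow> (u (x i) has_real_derivative u1 (x i) s) (at s within {0<..T})"
    and d2: "\<And>i s. s \<in> {0<..T} \<Longrightarrow> (u1 (x i) has_real_derivative u2 (x i) s) (at s within {0<..T})"
    and d3: "\<And>i s. s \<in> {0<..T} \<Longrightarrow> (u2 (x i) has_real_derivative u3 (x i) s) (at s within {0<..T})"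
    and b1: "\<And>s. s \<in> {0<..T} \<Longrightarrow> dnorm M h (\<lambda>i. u1 (x i) s) \<le> Cb * s powr (\<alpha> - 1)"
    and b2: "\<And>s. s \<in> {0<..T} \<Longrightarrow> dnorm M h (\<lambda>i. u2 (x i) s) \<le> Cb * s powr (\<alpha> - 2)"
    and b3: "\<And>s. s \<in> {0<..T} \<Longrightarrow> dnorm M h (\<lambda>i. u3 (x i) s) \<le> Cb * s powr (\<alpha> - 3)"
    and scal: "\<And>K U U1 U2 U3. 0 \<le> K \<Longrightarrow> continuous_on {0..T} U
      \<Longrightarrow> (\<And>s. s \<in> {0<..T} \<Longrightarrow> (U has_real_derivative U1 s) (at s within {0<..T}))
      \<Longrightarrow> (\<And>s. s \<in> {0<..T} \<Longrightarrow> (U1 has_real_derivative U2 s) (at s within {0<..T}))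
      \<Longrightarrow> (\<And>s. s \<in> {0<..T} \<Longrightarrow> (U2 has_real_derivative U3 s) (at s within {0<..T}))
      \<Longrightarrow> (\<And>s. s \<in> {0<..T} \<Longrightarrow> \<bar>U1 s\<bar> \<le> K * Cb * s powr (\<alpha> - 1))
      \<Longrightarrow> (\<And>s. s \<in> {0<..T} \<Longrightarrow> \<bar>U2 s\<bar> \<le> K * Cb * s powr (\<alpha> - 2))
      \<Longrightarrow> (\<And>s. s \<in> {0<..T} \<Longrightarrow> \<bar>U3 s\<bar> \<le> K * Cb * s powr (\<alpha> - 3))
      \<Longrightarrow> \<bar>D2 t (\<lambda>m. U (t m)) n - U1 (t n)\<bar> \<le> K * B"
  shows "dnorm M h (\<lambda>i. D2 t (\<lambda>m. u (x i) (t m)) n - u1 (x i) (t n)) \<le> B"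
proof -
  define E where "E = (\<lambda>i. D2 t (\<lambda>m. u (x i) (t m)) n - u1 (x i) (t n))"
  define K where "K = dnorm M h E"
  define I where "I = {1..M-1}"
  define c where "c = (\<lambda>i. h * E i)"
  define U where "U = (\<lambda>s. \<Sum>i\<in>I. c i * u (x i) s)"
  define U1 where "U1 = (\<lambda>s. \<Sum>i\<in>I. c i * u1 (x i) s)"
  define U2 where "U2 = (\<lambda>s. \<Sum>i\<in>I. c i * u2 (x i) s)"
  define U3 where "U3 = (\<lambda>s. \<Sum>i\<in>I. c i * u3 (x i) s)"
  have K0: "0 \<le> K" unfolding K_def dnorm_def using h by (simp add: sum_nonneg)
  have cU: "continuous_on {0..T} U" unfolding U_def
    by (intro continuous_on_sum continuous_on_mult continuous_on_const cont)
  have dU: "(U has_real_derivative U1 s) (at s within {0<..T})" if "s \<in> {0<..T}" for s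
    unfolding U_def U1_def by (intro DERIV_sum DERIV_cmult d1 that)
  have dU1: "(U1 has_real_derivative U2 s) (at s within {0<..T})" if "s \<in> {0<..T}" for s
    unfolding U1_def U2_def by (intro DERIV_sum DERIV_cmult d2 that)
  have dU2: "(U2 has_real_derivative U3 s) (at s within {0<..T})" if "s \<in> {0<..T}" for s
    unfolding U2_def U3_def by (intro DERIV_sum DERIV_cmult d3 that)
  have bnd: "\<bar>\<Sum>i\<in>I. c i * v i\<bar> \<le> K * (Cb * p)" if "dnorm M h v \<le> Cb * p" for v p
  proof -
    have "\<bar>\<Sum>i\<in>I. c i * v i\<bar> \<le> K * dnorm M h v"
      using CS[OF h, where e=E and v=v and M=M] unfolding c_def I_def K_def by simp
    also have "\<dots> \<le> K * (Cb * p)" using that K0 by (intro mult_left_mono) auto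
    finally show ?thesis .
  qed
  have bU1: "\<bar>U1 s\<bar> \<le> K * Cb * s powr (\<alpha> - 1)" if "s \<in> {0<..T}" for s
    using bnd[OF b1[OF that]] unfolding U1_def by (simp add: mult.assoc)
  have bU2: "\<bar>U2 s\<bar> \<le> K * Cb * s powr (\<alpha> - 2)" if "s \<in> {0<..T}" for s
    using bnd[OF b2[OF that]] unfolding U2_def by (simp add: mult.assoc)
  have bU3: "\<bar>U3 s\<bar> \<le> K * Cb * s powr (\<alpha> - 3)" if "s \<in> {0<..T}" for s
    using bnd[OF b3[OF that]] unfolding U3_def by (simp add: mult.assoc)
  have S: "\<bar>D2 t (\<lambda>m. U (t m)) n - U1 (t n)\<bar> \<le> K * B"
    by (rule scal[OF K0 cU dU dU1 dU2 bU1 bU2 bU3])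
  have "D2 t (\<lambda>m. U (t m)) n - U1 (t n) = (\<Sum>i\<in>I. c i * E i)"
    unfolding U_def U1_def D2_lin E_def by (simp add: sum_subtractf[symmetric] right_diff_distrib)
  also have "\<dots> = K * K" unfolding c_def I_def K_def using dnorm_sq[OF h, where e=E and M=M] by simp
  finally have "K * K \<le> K * B" using S by simp
  then show ?thesis
  proof (cases "K = 0")
    case True then show ?thesis using Bnn unfolding K_def E_def by simp
  next
    case False
    then have "K > 0" using K0 by simp
    with \<open>K * K \<le> K * B\<close> have "K \<le> B" by simp
    then show ?thesis unfolding K_def E_def .
  qed
qed


theorem mainTheorem10:
  fixes t :: "nat \<Rightarrow> real" and N :: nat and T :: real
    and M :: nat and h :: real and x :: "nat \<Rightarrow> real"
    and u u1 u2 u3 :: "real \<Rightarrow> real \<Rightarrow> real"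
    and Cb \<alpha> :: real
  assumes N: "N \<ge> 1"
    and t0: "t 0 = 0" and tN: "t N = T"
    and mesh: "\<And>k. 1 \<le> k \<Longrightarrow> k \<le> N \<Longrightarrow> t (k - 1) < t k"
    and h: "h > 0"
    and Cb: "Cb > 0" and \<alpha>: "1/2 \<le> \<alpha>" "\<alpha> \<le> 1"
    and cont: "\<And>i. continuous_on {0..T} (u (x i))"
    and d1: "\<And>i s. s \<in> {0<..T} \<Longrightarrow> (u (x i) has_real_derivative u1 (x i) s) (at s within {0<..T})"
    and d2: "\<And>i s. s \<in> {0<..T} \<Longrightarrow> (u1 (x i) has_real_derivative u2 (x i) s) (at s within {0<..T})"
    and d3: "\<And>i s. s \<in> {0<..T} \<Longrightarrow> (u2 (x i) has_real_derivative u3 (x i) s) (at s within {0<..T})"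
    and b1: "\<And>s. s \<in> {0<..T} \<Longrightarrow> dnorm M h (\<lambda>i. u1 (x i) s) \<le> Cb * s powr (\<alpha> - 1)"
    and b2: "\<And>s. s \<in> {0<..T} \<Longrightarrow> dnorm M h (\<lambda>i. u2 (x i) s) \<le> Cb * s powr (\<alpha> - 2)"
    and b3: "\<And>s. s \<in> {0<..T} \<Longrightarrow> dnorm M h (\<lambda>i. u3 (x i) s) \<le> Cb * s powr (\<alpha> - 3)"
  defines "eta \<equiv> \<lambda>n i. D2 t (\<lambda>m. u (x i) (t m)) n - u1 (x i) (t n)"
  shows "(\<forall>j. 3 \<le> j \<and> j \<le> N \<longrightarrow>
            dnorm M h (eta j) \<le> 2 * Cb * (tau t j)\<^sup>2 * t (j - 1) powr (\<alpha> - 3)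
                              + 1/2 * Cb * (tau t (j - 1))\<^sup>2 * t (j - 2) powr (\<alpha> - 3))
       \<and> (2 \<le> N \<longrightarrow>
            dnorm M h (eta 2) \<le> (2 * (ratio t 2)\<^sup>2 + 1 / (2 * \<alpha>)) * Cb * tau t 1 powr (\<alpha> - 1))
       \<and> dnorm M h (eta 1) \<le> Cb / \<alpha> * tau t 1 powr (\<alpha> - 1)"
proof -
  have tlt: "\<And>m k. m < k \<Longrightarrow> k \<le> N \<Longrightarrow> t m < t k" using mesh_lt[where t=t and N=N, OF mesh] by blast
  have tpos: "\<And>k. 1 \<le> k \<Longrightarrow> k \<le> N \<Longrightarrow> 0 < t k" using tlt[of 0] t0 by force
  have tT: "\<And>k. k \<le> N \<Longrightarrow> t k \<le> T"
  proof -
    fix k assume "k \<le> N"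
    then show "t k \<le> T" using tlt[of k N] tN by (cases "k = N") auto
  qed
  have \<alpha>0: "\<alpha> > 0" using \<alpha> by simp
  have tau1: "tau t 1 = t 1" unfolding tau_def using t0 by simp
  have t1: "0 < t 1" "t 1 \<le> T" using tpos[of 1] tT[of 1] N by auto
  have "dnorm M h (\<lambda>i. D2 t (\<lambda>m. u (x i) (t m)) 1 - u1 (x i) (t 1)) \<le> Cb / \<alpha> * tau t 1 powr (\<alpha> - 1)"
  proof (rule reduce[OF h _ Cb cont d1 d2 d3 b1 b2 b3])
    show "0 \<le> Cb / \<alpha> * tau t 1 powr (\<alpha> - 1)" using Cb \<alpha>0 by simp
    fix K U U1 U2 U3
    assume K: "0 \<le> K" and cU: "continuous_on {0..T} U"
      and dU: "\<And>s. s \<in> {0<..T} \<Longrightarrow> (U has_real_derivative U1 s) (at s within {0<..T})"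
      and dU1: "\<And>s. s \<in> {0<..T} \<Longrightarrow> (U1 has_real_derivative U2 s) (at s within {0<..T})"
      and bU1: "\<And>s. s \<in> {0<..T} \<Longrightarrow> \<bar>U1 s\<bar> \<le> K * Cb * s powr (\<alpha> - 1)"
      and bU2: "\<And>s. s \<in> {0<..T} \<Longrightarrow> \<bar>U2 s\<bar> \<le> K * Cb * s powr (\<alpha> - 2)"
    have KC: "0 \<le> K * Cb" using K Cb by simp
    have P: "\<bar>U (t 1) - U 0 - t 1 * U1 (t 1)\<bar> \<le> K * Cb / \<alpha> * t 1 powr \<alpha>"
      by (rule S1[OF t1 \<alpha>0 KC cU dU dU1 bU1 bU2])
    have e: "D2 t (\<lambda>m. U (t m)) 1 - U1 (t 1) = (U (t 1) - U 0 - t 1 * U1 (t 1)) / t 1"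
      unfolding D2_one tau1 using t0 t1 by (simp add: field_simps)
    have "\<bar>D2 t (\<lambda>m. U (t m)) 1 - U1 (t 1)\<bar> = \<bar>U (t 1) - U 0 - t 1 * U1 (t 1)\<bar> / t 1"
      unfolding e using t1 by simp
    also have "\<dots> \<le> (K * Cb / \<alpha> * t 1 powr \<alpha>) / t 1" using P t1 by (intro divide_right_mono) auto
    also have "\<dots> = K * (Cb / \<alpha> * tau t 1 powr (\<alpha> - 1))"
    proof -
      have "t 1 powr \<alpha> = t 1 * t 1 powr (\<alpha> - 1)" using t1 by (simp add: powr_mult_base)
      then show ?thesis unfolding tau1 using t1 by simp
    qed
    finally show "\<bar>D2 t (\<lambda>m. U (t m)) 1 - U1 (t 1)\<bar> \<le> K * (Cb / \<alpha> * tau t 1 powr (\<alpha> - 1))" .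
  qed
  then have part1: "dnorm M h (eta 1) \<le> Cb / \<alpha> * tau t 1 powr (\<alpha> - 1)" unfolding eta_def by simp
  have part2: "dnorm M h (eta 2) \<le> (2 * (ratio t 2)\<^sup>2 + 1 / (2 * \<alpha>)) * Cb * tau t 1 powr (\<alpha> - 1)" if N2: "2 \<le> N"
  proof -
    have t2: "t 1 < t 2" "t 2 \<le> T" using tlt[of 1 2] tT[of 2] N2 by auto
    have "dnorm M h (\<lambda>i. D2 t (\<lambda>m. u (x i) (t m)) 2 - u1 (x i) (t 2))
        \<le> (2 * (ratio t 2)\<^sup>2 + 1 / (2 * \<alpha>)) * Cb * tau t 1 powr (\<alpha> - 1)"
    proof (rule reduce[OF h _ Cb cont d1 d2 d3 b1 b2 b3])
      show "0 \<le> (2 * (ratio t 2)\<^sup>2 + 1 / (2 * \<alpha>)) * Cb * tau t 1 powr (\<alpha> - 1)" using Cb \<alpha>0 by simp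
      fix K U U1 U2 U3
      assume K: "0 \<le> K" and cU: "continuous_on {0..T} U"
        and dU: "\<And>s. s \<in> {0<..T} \<Longrightarrow> (U has_real_derivative U1 s) (at s within {0<..T})"
        and dU1: "\<And>s. s \<in> {0<..T} \<Longrightarrow> (U1 has_real_derivative U2 s) (at s within {0<..T})"
        and bU1: "\<And>s. s \<in> {0<..T} \<Longrightarrow> \<bar>U1 s\<bar> \<le> K * Cb * s powr (\<alpha> - 1)"
        and bU2: "\<And>s. s \<in> {0<..T} \<Longrightarrow> \<bar>U2 s\<bar> \<le> K * Cb * s powr (\<alpha> - 2)"
      have KC: "0 \<le> K * Cb" using K Cb by simp
      have tau2: "tau t 2 = t 2 - t 1" unfolding tau_def by simp
      have rat: "ratio t 2 = tau t 2 / t 1" unfolding ratio_def tau1[symmetric] by simp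
      have P: "\<bar>(1 + 2 * ratio t 2) / (tau t 2 * (1 + ratio t 2)) * (U (t 2) - U (t 1))
          - (ratio t 2)\<^sup>2 / (tau t 2 * (1 + ratio t 2)) * (U (t 1) - U 0) - U1 (t 2)\<bar>
          \<le> (2 * (ratio t 2)\<^sup>2 + 1 / (2 * \<alpha>)) * (K * Cb) * t 1 powr (\<alpha> - 1)"
        by (rule S2[OF t1(1) t2(1) t2(2) \<alpha> KC cU dU dU1 bU1 bU2 tau2 rat])
      have e: "D2 t (\<lambda>m. U (t m)) 2 - U1 (t 2) = (1 + 2 * ratio t 2) / (tau t 2 * (1 + ratio t 2)) * (U (t 2) - U (t 1))
          - (ratio t 2)\<^sup>2 / (tau t 2 * (1 + ratio t 2)) * (U (t 1) - U 0) - U1 (t 2)"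
        using D2_ge2[of 2 t "\<lambda>m. U (t m)"] t0 by (simp add: bker_def)
      show "\<bar>D2 t (\<lambda>m. U (t m)) 2 - U1 (t 2)\<bar> \<le> K * ((2 * (ratio t 2)\<^sup>2 + 1 / (2 * \<alpha>)) * Cb * tau t 1 powr (\<alpha> - 1))"
        using P unfolding e tau1 by (simp add: mult_ac)
    qed
    then show ?thesis unfolding eta_def by simp
  qed
  have part3: "dnorm M h (eta j) \<le> 2 * Cb * (tau t j)\<^sup>2 * t (j - 1) powr (\<alpha> - 3)
                              + 1/2 * Cb * (tau t (j - 1))\<^sup>2 * t (j - 2) powr (\<alpha> - 3)"
    if j: "3 \<le> j" "j \<le> N" for j
  proof -
    have tj: "0 < t (j - 2)" "t (j - 2) < t (j - 1)" "t (j - 1) < t j" "t j \<le> T"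
      using tpos[of "j - 2"] tlt[of "j - 2" "j - 1"] tlt[of "j - 1" j] tT[of j] j by auto
    have "dnorm M h (\<lambda>i. D2 t (\<lambda>m. u (x i) (t m)) j - u1 (x i) (t j))
        \<le> 2 * Cb * (tau t j)\<^sup>2 * t (j - 1) powr (\<alpha> - 3)
                              + 1/2 * Cb * (tau t (j - 1))\<^sup>2 * t (j - 2) powr (\<alpha> - 3)"
    proof (rule reduce[OF h _ Cb cont d1 d2 d3 b1 b2 b3])
      show "0 \<le> 2 * Cb * (tau t j)\<^sup>2 * t (j - 1) powr (\<alpha> - 3)
                              + 1/2 * Cb * (tau t (j - 1))\<^sup>2 * t (j - 2) powr (\<alpha> - 3)" using Cb by simp
      fix K U U1 U2 U3
      assume K: "0 \<le> K" and cU: "continuous_on {0..T} U"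
        and dU: "\<And>s. s \<in> {0<..T} \<Longrightarrow> (U has_real_derivative U1 s) (at s within {0<..T})"
        and dU1: "\<And>s. s \<in> {0<..T} \<Longrightarrow> (U1 has_real_derivative U2 s) (at s within {0<..T})"
        and dU2: "\<And>s. s \<in> {0<..T} \<Longrightarrow> (U2 has_real_derivative U3 s) (at s within {0<..T})"
        and bU3: "\<And>s. s \<in> {0<..T} \<Longrightarrow> \<bar>U3 s\<bar> \<le> K * Cb * s powr (\<alpha> - 3)"
      have KC: "0 \<le> K * Cb" using K Cb by simp
      have tauj: "tau t j = t j - t (j - 1)" unfolding tau_def by simp
      have tauj1: "tau t (j - 1) = t (j - 1) - t (j - 2)" unfolding tau_def by (simp add: diff_diff_left numeral_2_eq_2)
      have rat: "ratio t j = tau t j / tau t (j - 1)" unfolding ratio_def by simp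
      have P: "\<bar>(1 + 2 * ratio t j) / (tau t j * (1 + ratio t j)) * (U (t j) - U (t (j - 1)))
          - (ratio t j)\<^sup>2 / (tau t j * (1 + ratio t j)) * (U (t (j - 1)) - U (t (j - 2))) - U1 (t j)\<bar>
          \<le> 2 * (K * Cb) * (tau t j)\<^sup>2 * t (j - 1) powr (\<alpha> - 3) + 1/2 * (K * Cb) * (tau t (j - 1))\<^sup>2 * t (j - 2) powr (\<alpha> - 3)"
        by (rule S3[OF tj \<alpha>(2) KC dU dU1 dU2 bU3 tauj tauj1 rat])
      have e: "D2 t (\<lambda>m. U (t m)) j - U1 (t j) = (1 + 2 * ratio t j) / (tau t j * (1 + ratio t j)) * (U (t j) - U (t (j - 1)))
          - (ratio t j)\<^sup>2 / (tau t j * (1 + ratio t j)) * (U (t (j - 1)) - U (t (j - 2))) - U1 (t j)"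
      proof -
        have "j \<noteq> 1" using j by simp
        then show ?thesis using D2_ge2[of j t "\<lambda>m. U (t m)"] j by (simp add: bker_def)
      qed
      show "\<bar>D2 t (\<lambda>m. U (t m)) j - U1 (t j)\<bar> \<le> K * (2 * Cb * (tau t j)\<^sup>2 * t (j - 1) powr (\<alpha> - 3)
                              + 1/2 * Cb * (tau t (j - 1))\<^sup>2 * t (j - 2) powr (\<alpha> - 3))"
        using P unfolding e by (simp add: algebra_simps)
    qed
    then show ?thesis unfolding eta_def by simp
  qed
  show ?thesis using part1 part2 part3 by blast
qed

end
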